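(* $A(Q_{\min})=\frac{2\vec\rho}{b+1}+\mathrm{Reg}^\star$. Equivalently, $A(Q_{\min})$ is the set of $y\in\mathbb{R}^d$ with $y_1+\dots+y_d=0$ and $(y_1+\dots+y_s)-b(y_{d+1-s}+\dots+y_d)\ge s(d-s)$ for all $s\in\{1,\dots,d-1\}$, and this set equals $\{\frac{2\vec\rho}{b+1}+\sum_{i=1}^{d-1}\lambda_i(b\,\vec v_{d-i}-\vec v_i):\lambda_i\ge0\}$.
   Context: Let $b\ge2$, $d\ge1$ be integers, $I=\{(i,j)\in\mathbb{Z}^2:1\le i\le j\le d\}$, $E=\mathbb{R}^I$. For $q\in E$ and $(i,j)\in I$ put $\mu_{i,j}(q)=bq_{j,j}-q_{j,d}+b\sum_{s=i}^{j-1}(q_{s,j}-q_{s,j-1})$ and $\ell(q)=b\sum_{(i,j)\in I}q_{i,j}+\sum_{i=1}^d(2i-1-d-bi)q_{i,d}$. $Q_{\min}$ is the cone of $q\in E$ with $q_{i,j}\ge q_{i,j+1}$ and $q_{i,j}=q_{i+1,j+1}$ for all $1\le i\le j<d$. For a cone $Q'\subset E$, $A(Q')=\{y\in\mathbb{R}^d:\sum_{j=1}^dy_j\,\mu_{1,j}(q)\ge\ell(q)\ \forall q\in Q'\}$. $\vec\rho=(\frac{d+1}2-i)_{1\le i\le d}$. $\mathrm{Reg}\subset\mathbb{R}^d$ is the cone of $b$-regular vectors, i.e. $\mu$ with $\mu_i-\mu_{i+1}\le b(\mu_{d-i}-\mu_{d-i+1})$ for $1\le i\le d-1$, and $\mathrm{Reg}^\star$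 its dual cone for the standard scalar product. $\vec v_i=e_i-e_{i+1}$ where $(e_i)$ is the canonical basis of $\mathbb{R}^d$. *)

theory Defs
  imports Complex_Main
begin

(* Vectors of R^d are represented as functions nat => real supported on {1..d}. *)
definition vecs :: "nat \<Rightarrow> (nat \<Rightarrow> real) set" where
  "vecs d = {y. \<forall>k. k \<notin> {1..d} \<longrightarrow> y k = 0}"

definition Iset :: "nat \<Rightarrow> (nat \<times> nat) set" where
  "Iset d = {(i,j). 1 \<le> i \<and> i \<le> j \<and> j \<le> d}"

definition Espace :: "nat \<Rightarrow> (nat \<Rightarrow> nat \<Rightarrow> real) set" where
  "Espace d = {q. \<forall>i j. (i,j) \<notin> Iset d \<longrightarrow> q i j = 0}"

definition mu :: "nat \<Rightarrow> nat \<Rightarrow> (nat \<Rightarrow> nat \<Rightarrow> real) \<Rightarrow> nat \<Rightarrow> nat \<Rightarrow> real" where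
  "mu b d q i j = real b * q j j - q j d
      + real b * (\<Sum>s\<in>{i..<j}. q s j - q s (j - 1))"

definition ell :: "nat \<Rightarrow> nat \<Rightarrow> (nat \<Rightarrow> nat \<Rightarrow> real) \<Rightarrow> real" where
  "ell b d q = real b * (\<Sum>(i,j)\<in>Iset d. q i j)
      + (\<Sum>i=1..d. (2 * real i - 1 - real d - real b * real i) * q i d)"

definition Qmin :: "nat \<Rightarrow> (nat \<Rightarrow> nat \<Rightarrow> real) set" where
  "Qmin d = {q \<in> Espace d. \<forall>i j. 1 \<le> i \<and> i \<le> j \<and> j < d \<longrightarrow>
              q i j \<ge> q i (j+1) \<and> q i j = q (i+1) (j+1)}"

definition Aset :: "nat \<Rightarrow> nat \<Rightarrow> (nat \<Rightarrow> nat \<Rightarrow> real) set \<Rightarrow> (nat \<Rightarrow> real) set" where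
  "Aset b d Q' = {y \<in> vecs d. \<forall>q\<in>Q'. (\<Sum>j=1..d. y j * mu b d q 1 j) \<ge> ell b d q}"

definition rho :: "nat \<Rightarrow> nat \<Rightarrow> real" where
  "rho d i = (if i \<in> {1..d} then (real d + 1) / 2 - real i else 0)"

definition Reg :: "nat \<Rightarrow> nat \<Rightarrow> (nat \<Rightarrow> real) set" where
  "Reg b d = {m \<in> vecs d. \<forall>i. 1 \<le> i \<and> i \<le> d - 1 \<longrightarrow>
      m i - m (i+1) \<le> real b * (m (d - i) - m (d - i + 1))}"

definition RegDual :: "nat \<Rightarrow> nat \<Rightarrow> (nat \<Rightarrow> real) set" where
  "RegDual b d = {y \<in> vecs d. \<forall>m\<in>Reg b d. (\<Sum>k=1..d. y k * m k) \<ge> 0}"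

definition vv :: "nat \<Rightarrow> nat \<Rightarrow> real" where
  "vv i k = (if k = i then 1 else 0) - (if k = i + 1 then 1 else 0)"

end

theory Submission imports Defs begin

definition ps :: "(nat \<Rightarrow> real) \<Rightarrow> nat \<Rightarrow> real" where
  "ps y s = (\<Sum>k=1..s. y k)"

lemma refl_sum: "(\<Sum>i=1..n. g (n - i)) = (\<Sum>t<n. (g (t::nat)) :: real)"
  by (rule sum.reindex_bij_witness[where i="\<lambda>t. n - t" and j="\<lambda>i. n - i"]) auto

lemma Iset_Suc: "Iset (Suc d) = Iset d \<union> (\<lambda>i. (i, Suc d)) ` {1..Suc d}"
  unfolding Iset_def by (auto simp: le_Suc_eq)

lemma Iset_fin: "finite (Iset d)"
proof -
  have "Iset d \<subseteq> {1..d} \<times> {1..d}" unfolding Iset_def by auto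
  then show ?thesis by (rule finite_subset) auto
qed

lemma Iset_sum: "(\<Sum>p\<in>Iset d. f (snd p - fst p)) = (\<Sum>t<d. real (d - t) * (f t :: real))"
proof (induction d)
  case 0
  have "Iset 0 = {}" unfolding Iset_def by auto
  then show ?case by simp
next
  case (Suc d)
  have disj: "Iset d \<inter> (\<lambda>i. (i, Suc d)) ` {1..Suc d} = {}" unfolding Iset_def by auto
  have "(\<Sum>p\<in>Iset (Suc d). f (snd p - fst p)) = (\<Sum>p\<in>Iset d. f (snd p - fst p))
      + (\<Sum>p\<in>(\<lambda>i. (i, Suc d)) ` {1..Suc d}. f (snd p - fst p))"
    unfolding Iset_Suc by (rule sum.union_disjoint) (use Iset_fin disj in \<open>auto simp: Iset_def\<close>)
  also have "(\<Sum>p\<in>(\<lambda>i. (i, Suc d)) ` {1..Suc d}. f (snd p - fst p)) = (\<Sum>i=1..Suc d. f (Suc d - i))"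
    by (subst sum.reindex) (auto simp: inj_on_def)
  also have "\<dots> = (\<Sum>t<Suc d. f t)" by (rule refl_sum)
  finally have "(\<Sum>p\<in>Iset (Suc d). f (snd p - fst p)) = (\<Sum>t<d. real (d - t) * f t) + (\<Sum>t<Suc d. f t)"
    using Suc by simp
  also have "\<dots> = (\<Sum>t<Suc d. real (Suc d - t) * f t)"
    by (simp add: sum.distrib[symmetric] Suc_diff_le algebra_simps)
  finally show ?case .
qed

lemma refl_sum2: "(\<Sum>i=1..d. real i * f (d - i)) = (\<Sum>t<d. real (d - t) * (f t :: real))"
proof -
  have "(\<Sum>i=1..d. real i * f (d - i)) = (\<Sum>i=1..d. real (d - (d - i)) * f (d - i))"
    by (rule sum.cong) auto
  also have "\<dots> = (\<Sum>t<d. real (d - t) * (f t :: real))" by (rule refl_sum)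
  finally show ?thesis .
qed

lemma L5: "(\<Sum>t<s. (real d - 1 - 2 * real t)) = real s * (real d - real s)"
  by (induction s) (auto simp: algebra_simps)

lemma L6: "(\<Sum>s\<in>{1..<(j::nat)}. (c (j - s) - c (j - 1 - s) :: real)) = c (j - 1) - c 0"
proof (induction j arbitrary: c)
  case 0 then show ?case by simp
next
  case (Suc j)
  show ?case
  proof (cases j)
    case 0 then show ?thesis by simp
  next
    case (Suc j')
    have "(\<Sum>s\<in>{1..<Suc j}. (c (Suc j - s) - c (Suc j - 1 - s))) =
        (\<Sum>s\<in>{1..<j}. (c (Suc j - s) - c (Suc j - 1 - s))) + (c 1 - c 0)"
      using Suc by simp
    also have "(\<Sum>s\<in>{1..<j}. (c (Suc j - s) - c (Suc j - 1 - s))) =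
        (\<Sum>s\<in>{1..<j}. ((\<lambda>t. c (Suc t)) (j - s) - (\<lambda>t. c (Suc t)) (j - 1 - s)))"
    proof (rule sum.cong)
      fix x assume "x \<in> {1..<j}"
      then have "Suc j - x = Suc (j - x)" "Suc j - 1 - x = Suc (j-1-x)" by auto
      then show "c (Suc j - x) - c (Suc j - 1 - x) = (\<lambda>t. c (Suc t)) (j - x) - (\<lambda>t. c (Suc t)) (j - 1 - x)"
        by simp
    qed simp
    also have "\<dots> = c j - c 1" using Suc.IH[of "\<lambda>t. c (Suc t)"] Suc by simp
    finally show ?thesis by simp
  qed
qed

lemma L7: assumes "q \<in> Qmin d"
  shows "\<And>j. 1 + k \<le> j \<Longrightarrow> j \<le> d \<Longrightarrow> q (1 + k) j = q 1 (j - k)"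
proof (induction k)
  case 0 then show ?case by simp
next
  case (Suc k)
  have h: "\<forall>i j. 1 \<le> i \<and> i \<le> j \<and> j < d \<longrightarrow> q i j = q (i+1) (j+1)"
    using assms unfolding Qmin_def by auto
  have "q (1 + k) (j - 1) = q (1 + k + 1) (j - 1 + 1)"
    by (rule h[rule_format]) (use Suc.prems in auto)
  then have "q (1 + Suc k) j = q (1 + k) (j-1)" using Suc.prems by simp
  also have "\<dots> = q 1 (j - 1 - k)" using Suc by auto
  finally show ?case by simp
qed

lemma L7': assumes "q \<in> Qmin d" "1 \<le> i" "i \<le> j" "j \<le> d"
  shows "q i j = q 1 (j - i + 1)"
  using L7[OF assms(1), of "i - 1" j] assms by (simp add: Suc_diff_le)

lemma L8: assumes "q \<in> Qmin d" "1 \<le> j" "j \<le> d"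
  shows "mu b d q 1 j = real b * q 1 j - q 1 (d - j + 1)"
proof -
  have a: "q j j = q 1 1" using L7'[OF assms(1), of j j] assms by simp
  have bq: "q j d = q 1 (d - j + 1)" using L7'[OF assms(1), of j d] assms by simp
  have "(\<Sum>s\<in>{1..<j}. q s j - q s (j - 1)) = (\<Sum>s\<in>{1..<j}. (\<lambda>t. q 1 (t+1)) (j - s) - (\<lambda>t. q 1 (t+1)) (j - 1 - s))"
  proof (rule sum.cong)
    fix s assume s: "s \<in> {1..<j}"
    have "q s j = q 1 (j - s + 1)" using L7'[OF assms(1), of s j] s assms by simp
    moreover have "q s (j-1) = q 1 (j - 1 - s + 1)" using L7'[OF assms(1), of s "j-1"] s assms by auto
    ultimately show "q s j - q s (j - 1) = (\<lambda>t. q 1 (t+1)) (j - s) - (\<lambda>t. q 1 (t+1)) (j - 1 - s)" by simp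
  qed simp
  also have "\<dots> = q 1 j - q 1 1" using L6[of "\<lambda>t. q 1 (t+1)" j] assms by simp
  finally have eq: "(\<Sum>s\<in>{1..<j}. q s j - q s (j - 1)) = q 1 j - q 1 1" .
  show ?thesis unfolding mu_def a bq eq by (simp add: algebra_simps)
qed

lemma L9: assumes "q \<in> Qmin d"
  shows "ell b d q = (\<Sum>i=1..d. (2 * real i - 1 - real d) * q 1 (d - i + 1))"
proof -
  let ?c = "\<lambda>t. q 1 (t+1)"
  have "(\<Sum>(i,j)\<in>Iset d. q i j) = (\<Sum>p\<in>Iset d. ?c (snd p - fst p))"
  proof (rule sum.cong)
    fix p assume "p \<in> Iset d"
    then obtain i j where p: "p = (i,j)" "1 \<le> i" "i \<le> j" "j \<le> d" unfolding Iset_def by auto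
    then have "q i j = q 1 (j - i + 1)" using L7'[OF assms, of i j] by simp
    then show "(case p of (i,j) \<Rightarrow> q i j) = ?c (snd p - fst p)"
      using p by simp
  qed simp
  also have "\<dots> = (\<Sum>i=1..d. real i * ?c (d - i))" using Iset_sum[where f="?c" and d=d] refl_sum2[where f="?c" and d=d] by simp
  finally have e1: "(\<Sum>(i,j)\<in>Iset d. q i j) = (\<Sum>i=1..d. real i * ?c (d - i))" .
  have e2: "(\<Sum>i=1..d. (2 * real i - 1 - real d - real b * real i) * q i d)
     = (\<Sum>i=1..d. (2 * real i - 1 - real d) * ?c (d - i)) - real b * (\<Sum>i=1..d. real i * ?c (d - i))"
    unfolding sum_distrib_left sum_subtractf[symmetric]
  proof (rule sum.cong)
    fix i assume "i \<in> {1..d}"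
    then have "q i d = ?c (d - i)" using L7'[OF assms, of i d] by simp
    then show "(2 * real i - 1 - real d - real b * real i) * q i d =
         (2 * real i - 1 - real d) * ?c (d - i) - real b * (real i * ?c (d - i))"
      by (simp add: algebra_simps)
  qed simp
  show ?thesis unfolding ell_def e1 e2 by simp
qed

definition G :: "nat \<Rightarrow> nat \<Rightarrow> (nat \<Rightarrow> real) \<Rightarrow> (nat \<Rightarrow> real) \<Rightarrow> real" where
  "G b d y c = (\<Sum>j=1..d. y j * (real b * c (j - 1) - c (d - j)))
      - (\<Sum>i=1..d. (2 * real i - 1 - real d) * c (d - i))"

lemma L10: assumes "q \<in> Qmin d"
  shows "(\<Sum>j=1..d. y j * mu b d q 1 j) - ell b d q = G b d y (\<lambda>t. q 1 (t+1))"
proof -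
  have "(\<Sum>j=1..d. y j * mu b d q 1 j) = (\<Sum>j=1..d. y j * (real b * q 1 (j - 1 + 1) - q 1 (d - j + 1)))"
  proof (rule sum.cong)
    fix j assume "j \<in> {1..d}"
    then show "y j * mu b d q 1 j = y j * (real b * q 1 (j - 1 + 1) - q 1 (d - j + 1))"
      using L8[OF assms, of j b] by simp
  qed simp
  then show ?thesis unfolding G_def L9[OF assms] by simp
qed

lemma L14: assumes "\<And>t. t < d \<Longrightarrow> c t = c' t"
  shows "G b d y c = G b d y c'"
  unfolding G_def
  by (intro arg_cong2[where f="(-)"] sum.cong refl) (auto simp: assms)

lemma G_alt: "G b d y c = (\<Sum>j=1..d. (real b * y j) * c (j - 1)) - (\<Sum>j=1..d. y j * c (d - j))
      - (\<Sum>i=1..d. (2 * real i - 1 - real d) * c (d - i))"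
  unfolding G_def by (simp add: sum_subtractf[symmetric] algebra_simps)

lemma linh: "finite S \<Longrightarrow> (\<Sum>x\<in>X. (a x::real) * (\<alpha> + (\<Sum>s\<in>S. \<delta> s * g s x))) =
   \<alpha> * (\<Sum>x\<in>X. a x) + (\<Sum>s\<in>S. \<delta> s * (\<Sum>x\<in>X. a x * g s x)) "
proof -
  have "(\<Sum>x\<in>X. a x * (\<alpha> + (\<Sum>s\<in>S. \<delta> s * g s x))) =
     (\<Sum>x\<in>X. \<alpha> * a x + (\<Sum>s\<in>S. \<delta> s * (a x * g s x)))"
    by (rule sum.cong) (auto simp: distrib_left sum_distrib_left mult_ac)
  also have "\<dots> = \<alpha> * (\<Sum>x\<in>X. a x) + (\<Sum>x\<in>X. \<Sum>s\<in>S. \<delta> s * (a x * g s x))"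
    by (simp add: sum.distrib sum_distrib_left)
  also have "(\<Sum>x\<in>X. \<Sum>s\<in>S. \<delta> s * (a x * g s x)) = (\<Sum>s\<in>S. \<delta> s * (\<Sum>x\<in>X. a x * g s x))"
    by (subst sum.swap) (simp add: sum_distrib_left)
  finally show ?thesis .
qed

lemma L13: assumes "finite S"
  shows "G b d y (\<lambda>t. \<alpha> + (\<Sum>s\<in>S. \<delta> s * ind s t)) =
     \<alpha> * G b d y (\<lambda>_. 1) + (\<Sum>s\<in>S. \<delta> s * G b d y (ind s))"
  unfolding G_alt linh[OF assms]
  by (simp only: right_diff_distrib sum_subtractf mult_1_right)

lemma tele: "t \<le> n \<Longrightarrow> (\<Sum>s\<in>{Suc t..n}. (c (s - 1) - c s :: real)) = c t - c n"
  by (induction n rule: dec_induct) auto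

lemma L15: assumes "t < d"
  shows "(c::nat\<Rightarrow>real) t = c (d - 1) + (\<Sum>s\<in>{1..d-1}. (c (s - 1) - c s) * (if t < s then 1 else 0))"
proof -
  have "(\<Sum>s\<in>{1..d-1}. (c (s - 1) - c s) * (if t < s then 1 else 0)) =
     (\<Sum>s\<in>{1..d-1}. if t < s then (c (s - 1) - c s) else 0)"
    by (rule sum.cong) auto
  also have "\<dots> = (\<Sum>s\<in>{s\<in>{1..d-1}. t < s}. (c (s - 1) - c s))"
    by (subst sum.inter_filter) auto
  also have "{s\<in>{1..d-1}. t < s} = {Suc t..d-1}" by auto
  also have "(\<Sum>s\<in>{Suc t..d-1}. (c (s - 1) - c s)) = c t - c (d-1)"
    using assms by (intro tele) auto
  finally show ?thesis by simp
qed

lemma ps_split: "m \<le> n \<Longrightarrow> ps y n = ps y m + (\<Sum>k=Suc m..n. y k)"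
proof -
  assume "m \<le> n"
  then obtain p where p: "n = m + p" using le_Suc_ex by blast
  have "sum y {1..m+p} = sum y {1..m} + sum y {m+1..m+p}" by (rule sum.ub_add_nat) simp
  then show ?thesis unfolding ps_def p by simp
qed

lemma L12: assumes "s \<le> d"
  shows "G b d y (\<lambda>t. if t < s then 1 else 0) = real b * ps y s - (ps y d - ps y (d - s)) - real s * (real d - real s)"
proof -
  have A: "(\<Sum>j=1..d. (real b * y j) * (if j - 1 < s then 1 else 0)) = real b * ps y s"
  proof -
    have "(\<Sum>j=1..d. (real b * y j) * (if j - 1 < s then 1 else 0)) = (\<Sum>j=1..d. if j \<le> s then real b * y j else 0)"
      by (rule sum.cong) auto
    also have "\<dots> = (\<Sum>j\<in>{j\<in>{1..d}. j \<le> s}. real b * y j)" by (subst sum.inter_filter) auto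
    also have "{j\<in>{1..d}. j \<le> s} = {1..s}" using assms by auto
    finally show ?thesis by (simp add: ps_def sum_distrib_left)
  qed
  have B: "(\<Sum>j=1..d. y j * (if d - j < s then 1 else 0)) = ps y d - ps y (d - s)"
  proof -
    have "(\<Sum>j=1..d. y j * (if d - j < s then 1 else 0)) = (\<Sum>j=1..d. if d - j < s then y j else 0)"
      by (rule sum.cong) auto
    also have "\<dots> = (\<Sum>j\<in>{j\<in>{1..d}. d - j < s}. y j)" by (subst sum.inter_filter) auto
    also have "{j\<in>{1..d}. d - j < s} = {Suc (d - s)..d}" using assms by auto
    finally show ?thesis using ps_split[of "d - s" d y] by simp
  qed
  have C: "(\<Sum>i=1..d. (2 * real i - 1 - real d) * (if d - i < s then 1 else 0)) = real s * (real d - real s)"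
  proof -
    let ?g = "\<lambda>t. if t < s then real d - 1 - 2 * real t else 0"
    have "(\<Sum>i=1..d. (2 * real i - 1 - real d) * (if d - i < s then 1 else 0)) = (\<Sum>i=1..d. ?g (d - i))"
      by (rule sum.cong) (auto simp: of_nat_diff)
    also have "\<dots> = (\<Sum>t<d. ?g t)" by (rule refl_sum)
    also have "\<dots> = (\<Sum>t\<in>{t\<in>{..<d}. t < s}. real d - 1 - 2 * real t)" by (subst sum.inter_filter) auto
    also have "{t\<in>{..<d}. t < s} = {..<s}" using assms by auto
    finally show ?thesis using L5 by simp
  qed
  show ?thesis by (subst G_alt) (simp only: A B C)
qed

definition T :: "nat \<Rightarrow> nat \<Rightarrow> (nat \<Rightarrow> real) set" where
  "T b d = {y \<in> vecs d. ps y d = 0 \<and> (\<forall>s\<in>{1..d-1}. ps y s + real b * ps y (d - s) \<ge> real s * (real d - real s))}"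

lemma ps0[simp]: "ps y 0 = 0" by (simp add: ps_def)

lemma G1: assumes "1 \<le> d" shows "G b d y (\<lambda>_. 1) = (real b - 1) * ps y d"
proof -
  have "G b d y (\<lambda>_. 1) = G b d y (\<lambda>t. if t < d then 1 else 0)" by (rule L14) simp
  also have "\<dots> = (real b - 1) * ps y d" by (subst L12) (auto simp: algebra_simps)
  finally show ?thesis .
qed

lemma Gneg1: assumes "1 \<le> d" shows "G b d y (\<lambda>_. -1) = - ((real b - 1) * ps y d)"
proof -
  have "G b d y (\<lambda>_. -1) = G b d y (\<lambda>t. -1 + (\<Sum>s\<in>{}. (0::real) * (if t < s then 1 else 0)))" by simp
  also have "\<dots> = - G b d y (\<lambda>_. 1)" by (subst L13) auto
  finally show ?thesis using G1[OF assms] by simp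
qed

lemma Qmin_const: "(\<lambda>i j. if (i,j) \<in> Iset d then a else 0) \<in> Qmin d"
  unfolding Qmin_def Espace_def Iset_def by auto

lemma Qmin_ind: "(\<lambda>i j. if (i,j) \<in> Iset d \<and> j - i < s then 1 else 0) \<in> Qmin d"
  unfolding Qmin_def Espace_def Iset_def by auto

lemma Aset_T: assumes "b \<ge> 2" "d \<ge> 1"
  shows "Aset b d (Qmin d) = T b d"
proof
  show "Aset b d (Qmin d) \<subseteq> T b d"
  proof
    fix y assume y: "y \<in> Aset b d (Qmin d)"
    then have yv: "y \<in> vecs d" unfolding Aset_def by blast
    have yq: "G b d y (\<lambda>t. q 1 (t+1)) \<ge> 0" if q: "q \<in> Qmin d" for q
    proof -
      have "(\<Sum>j=1..d. y j * mu b d q 1 j) \<ge> ell b d q" using y q unfolding Aset_def by blast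
      then show ?thesis using L10[OF q, of y b] by linarith
    qed
    have "G b d y (\<lambda>t. (\<lambda>i j. if (i,j) \<in> Iset d then 1 else 0) 1 (t+1)) \<ge> 0" by (rule yq[OF Qmin_const])
    moreover have "G b d y (\<lambda>t. (\<lambda>i j. if (i,j) \<in> Iset d then 1 else 0) 1 (t+1)) = G b d y (\<lambda>_. 1)"
      by (rule L14) (auto simp: Iset_def)
    ultimately have p1: "(real b - 1) * ps y d \<ge> 0" using G1[OF assms(2)] by simp
    have "G b d y (\<lambda>t. (\<lambda>i j. if (i,j) \<in> Iset d then -1 else 0) 1 (t+1)) \<ge> 0" by (rule yq[OF Qmin_const])
    moreover have "G b d y (\<lambda>t. (\<lambda>i j. if (i,j) \<in> Iset d then -1 else 0) 1 (t+1)) = G b d y (\<lambda>_. -1)"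
      by (rule L14) (auto simp: Iset_def)
    ultimately have p2: "- ((real b - 1) * ps y d) \<ge> 0" using Gneg1[OF assms(2)] by simp
    have bpos: "real b - 1 > 0" using assms by simp
    have pd: "ps y d = 0" using p1 p2 bpos
      by (metis add.inverse_neutral mult_eq_0_iff neg_0_le_iff_le nle_le order_less_irrefl)
    have key: "real b * ps y s + ps y (d - s) \<ge> real s * (real d - real s)" if s: "s \<in> {1..d-1}" for s
    proof -
      have "G b d y (\<lambda>t. (\<lambda>i j. if (i,j) \<in> Iset d \<and> j - i < s then 1 else 0) 1 (t+1)) \<ge> 0"
        by (rule yq[OF Qmin_ind])
      moreover have "G b d y (\<lambda>t. (\<lambda>i j. if (i,j) \<in> Iset d \<and> j - i < s then 1 else 0) 1 (t+1))
          = G b d y (\<lambda>t. if t < s then 1 else 0)"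
        by (rule L14) (auto simp: Iset_def)
      moreover have "s \<le> d" using s by auto
      ultimately show ?thesis using L12[of s d b y] pd by simp
    qed
    have "ps y s + real b * ps y (d - s) \<ge> real s * (real d - real s)" if s: "s \<in> {1..d-1}" for s
    proof -
      have ds: "d - s \<in> {1..d-1}" using s by auto
      have e1: "d - (d - s) = s" and e2: "real (d - s) = real d - real s" using s by auto
      have "real b * ps y (d-s) + ps y s \<ge> (real d - real s) * (real d - (real d - real s))"
        using key[OF ds] unfolding e1 e2 .
      then show ?thesis by (simp add: algebra_simps)
    qed
    then show "y \<in> T b d" unfolding T_def using yv pd by auto
  qed
next
  show "T b d \<subseteq> Aset b d (Qmin d)"
  proof
    fix y assume y: "y \<in> T b d"
    have pd: "ps y d = 0" using y unfolding T_def by auto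
    have key: "G b d y (\<lambda>t. if t < s then 1 else 0) \<ge> 0" if s: "s \<in> {1..d-1}" for s
    proof -
      have "d - s \<in> {1..d-1}" using s by auto
      then have "ps y (d - s) + real b * ps y (d - (d - s)) \<ge> real (d - s) * (real d - real (d - s))"
        using y unfolding T_def by blast
      moreover have e1: "d - (d - s) = s" and e2: "real (d - s) = real d - real s" and sd: "s \<le> d" using s by auto
      ultimately have "ps y (d - s) + real b * ps y s \<ge> (real d - real s) * (real d - (real d - real s))"
        unfolding e1 e2 by simp
      moreover have "G b d y (\<lambda>t. if t < s then 1 else 0) = real b * ps y s - (ps y d - ps y (d - s)) - real s * (real d - real s)"
        using L12[OF sd] .
      ultimately show ?thesis using pd by (simp add: algebra_simps)
    qed
    have "(\<Sum>j=1..d. y j * mu b d q 1 j) \<ge> ell b d q" if q: "q \<in> Qmin d" for q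
    proof -
      let ?c = "\<lambda>t. q 1 (t+1)"
      have mono: "?c (s - 1) - ?c s \<ge> 0" if s: "s \<in> {1..d-1}" for s
      proof -
        have h: "\<forall>i j. 1 \<le> i \<and> i \<le> j \<and> j < d \<longrightarrow> q i (j+1) \<le> q i j"
          using q unfolding Qmin_def by blast
        have "q 1 (s+1) \<le> q 1 s" by (rule h[rule_format]) (use s in auto)
        then show ?thesis using s by simp
      qed
      have "G b d y ?c = G b d y (\<lambda>t. ?c (d - 1) + (\<Sum>s\<in>{1..d-1}. (?c (s - 1) - ?c s) * (if t < s then 1 else 0)))"
        by (rule L14) (rule L15)
      also have "\<dots> = ?c (d - 1) * G b d y (\<lambda>_. 1) + (\<Sum>s\<in>{1..d-1}. (?c (s - 1) - ?c s) * G b d y (\<lambda>t. if t < s then 1 else 0))"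
        by (rule L13) simp
      also have "\<dots> = (\<Sum>s\<in>{1..d-1}. (?c (s - 1) - ?c s) * G b d y (\<lambda>t. if t < s then 1 else 0))"
        using G1[OF assms(2)] pd by simp
      also have "\<dots> \<ge> 0" using mono key by (intro sum_nonneg mult_nonneg_nonneg) auto
      finally show ?thesis using L10[OF q, of y b] by simp
    qed
    then show "y \<in> Aset b d (Qmin d)" using y unfolding Aset_def T_def by auto
  qed
qed

definition T0 :: "nat \<Rightarrow> nat \<Rightarrow> (nat \<Rightarrow> real) set" where
  "T0 b d = {y \<in> vecs d. ps y d = 0 \<and> (\<forall>s\<in>{1..d-1}. ps y s + real b * ps y (d - s) \<ge> 0)}"

lemma ps_Suc: "ps y (Suc k) = ps y k + y (Suc k)"
  by (simp add: ps_def)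

lemma vecs_eq: assumes "y \<in> vecs d" "y' \<in> vecs d" "\<And>s. s \<le> d \<Longrightarrow> ps y s = ps y' s"
  shows "y = y'"
proof
  fix k
  show "y k = y' k"
  proof (cases "k \<in> {1..d}")
    case True
    then obtain k' where k: "k = Suc k'" "k' \<le> d" by (cases k) auto
    have "ps y (Suc k') = ps y' (Suc k')" "ps y k' = ps y' k'" using assms(3) k True by auto
    then show ?thesis unfolding k ps_Suc by simp
  next
    case False
    then show ?thesis using assms(1,2) unfolding vecs_def by auto
  qed
qed

lemma psind: assumes "t \<le> d" shows "(\<Sum>k=1..d. y k * (if k \<le> t then 1 else 0)) = ps y t"
proof -
  have "(\<Sum>k=1..d. y k * (if k \<le> t then 1 else 0)) = (\<Sum>k=1..d. if k \<le> t then y k else 0)"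
    by (rule sum.cong) auto
  also have "\<dots> = (\<Sum>k\<in>{k\<in>{1..d}. k \<le> t}. y k)" by (subst sum.inter_filter) auto
  also have "{k\<in>{1..d}. k \<le> t} = {1..t}" using assms by auto
  finally show ?thesis by (simp add: ps_def)
qed

lemma abel: "(\<Sum>k=1..Suc n. z k * m k) = (\<Sum>i=1..n. (m i - m (Suc i)) * ps z i) + m (Suc n) * ps z (Suc n)"
proof (induction n)
  case 0 then show ?case by (simp add: ps_def)
next
  case (Suc n)
  have "(\<Sum>k=1..Suc (Suc n). z k * m k) = (\<Sum>k=1..Suc n. z k * m k) + z (Suc (Suc n)) * m (Suc (Suc n))"
    by simp
  also have "\<dots> = (\<Sum>i=1..Suc n. (m i - m (Suc i)) * ps z i) + m (Suc (Suc n)) * ps z (Suc (Suc n))"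
    unfolding Suc ps_Suc[of z "Suc n"] by (simp add: algebra_simps)
  finally show ?case .
qed

lemma rev_sum1: "(\<Sum>i=1..(d::nat)-1. f (d - i) :: real) = (\<Sum>i=1..d-1. f i)"
  by (rule sum.reindex_bij_witness[where i="\<lambda>i. d - i" and j="\<lambda>i. d - i"]) auto

lemma alg: assumes "(B::real) \<noteq> 0" "B = c*c - 1"
  shows "c * ((x + c*y)/B) - (y + c*x)/B = y"
proof -
  have "c * ((x + c*y)/B) - (y + c*x)/B = (c*(x+c*y) - (y + c*x))/B" by (simp add: diff_divide_distrib)
  also have "c*(x+c*y) - (y + c*x) = y * B" unfolding assms(2) by (simp add: algebra_simps)
  finally show ?thesis using assms(1) by simp
qed

lemma RegDual_T0: assumes "b \<ge> 2" "d \<ge> 1"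
  shows "RegDual b d = T0 b d"
proof
  have b2: "real b \<ge> 2" using assms by simp
  then have b4: "real b * real b \<ge> 2 * 2" by (intro mult_mono) auto
  then have bb: "real b * real b \<ge> 1" by simp
  show "RegDual b d \<subseteq> T0 b d"
  proof
    fix z assume z: "z \<in> RegDual b d"
    then have zv: "z \<in> vecs d" and zm: "\<And>m. m \<in> Reg b d \<Longrightarrow> (\<Sum>k=1..d. z k * m k) \<ge> 0"
      unfolding RegDual_def by auto
    let ?m1 = "\<lambda>k. if k \<in> {1..d} then (1::real) else 0"
    have "?m1 \<in> Reg b d" "(\<lambda>k. - ?m1 k) \<in> Reg b d" unfolding Reg_def vecs_def by auto
    then have "(\<Sum>k=1..d. z k * ?m1 k) \<ge> 0" "(\<Sum>k=1..d. z k * - ?m1 k) \<ge> 0" using zm by blast+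
    moreover have "(\<Sum>k=1..d. z k * ?m1 k) = ps z d" by (simp add: ps_def)
    moreover have "(\<Sum>k=1..d. z k * - ?m1 k) = - ps z d" by (simp add: ps_def sum_negf)
    ultimately have pd: "ps z d = 0" by linarith
    have "ps z s + real b * ps z (d - s) \<ge> 0" if s: "s \<in> {1..d-1}" for s
    proof -
      let ?ms = "\<lambda>k. if k \<in> {1..d} then (if k \<le> s then 1 else 0) + real b * (if k \<le> d - s then 1 else 0) else 0"
      have "?ms \<in> Reg b d"
      proof -
        have "?ms i - ?ms (i+1) \<le> real b * (?ms (d - i) - ?ms (d - i + 1))" if i: "1 \<le> i" "i \<le> d - 1" for i
        proof -
          have r1: "i \<in> {1..d}" "i+1 \<in> {1..d}" "d - i \<in> {1..d}" "d - i + 1 \<in> {1..d}" using i by auto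
          have l: "?ms i - ?ms (i+1) = (if i = s then 1 else 0) + real b * (if i = d - s then 1 else 0)"
            using r1 by (simp only: if_True) (auto simp: algebra_simps)
          have r: "?ms (d - i) - ?ms (d - i + 1) = (if i = d - s then 1 else 0) + real b * (if i = s then 1 else 0)"
            using r1 i s by (simp only: if_True) (auto simp: algebra_simps)
          show ?thesis unfolding l r using bb b2 by (auto simp: algebra_simps)
        qed
        moreover have "?ms \<in> vecs d" unfolding vecs_def by auto
        ultimately show ?thesis unfolding Reg_def by blast
      qed
      then have "(\<Sum>k=1..d. z k * ?ms k) \<ge> 0" using zm by blast
      moreover have "(\<Sum>k=1..d. z k * ?ms k) = (\<Sum>k=1..d. z k * (if k \<le> s then 1 else 0)) + real b * (\<Sum>k=1..d. z k * (if k \<le> d - s then 1 else 0))"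
        by (simp add: sum.distrib sum_distrib_left algebra_simps)
      moreover have "s \<le> d" "d - s \<le> d" using s by auto
      ultimately show ?thesis using psind by simp
    qed
    then show "z \<in> T0 b d" unfolding T0_def using zv pd by auto
  qed
next
  show "T0 b d \<subseteq> RegDual b d"
  proof
    fix z assume z: "z \<in> T0 b d"
    have pd: "ps z d = 0" and zc: "\<And>s. s \<in> {1..d-1} \<Longrightarrow> ps z s + real b * ps z (d - s) \<ge> 0"
      using z unfolding T0_def by auto
    have b4: "real b * real b \<ge> 2 * 2" using assms by (intro mult_mono) auto
    have bne: "real b * real b - 1 > 0" using b4 by simp
    define lam where "lam i = (ps z i + real b * ps z (d - i)) / (real b * real b - 1)" for i
    have lampos: "lam i \<ge> 0" if "i \<in> {1..d-1}" for i
      unfolding lam_def using zc[OF that] bne by simp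
    have psl: "ps z i = real b * lam (d - i) - lam i" if i: "i \<in> {1..d-1}" for i
    proof -
      have "d - (d - i) = i" using i by auto
      then show ?thesis unfolding lam_def using alg[of "real b * real b - 1" "real b" "ps z (d - i)" "ps z i"] bne by simp
    qed
    have "(\<Sum>k=1..d. z k * m k) \<ge> 0" if m: "m \<in> Reg b d" for m
    proof -
      have D: "m i - m (Suc i) \<le> real b * (m (d - i) - m (Suc (d - i)))" if i: "i \<in> {1..d-1}" for i
        using m i unfolding Reg_def by auto
      have dd: "Suc (d - 1) = d" using assms by simp
      have "(\<Sum>k=1..d. z k * m k) = (\<Sum>i=1..d-1. (m i - m (Suc i)) * ps z i)"
        using abel[of z m "d - 1"] pd unfolding dd by simp
      also have "\<dots> = (\<Sum>i=1..d-1. real b * ((m i - m (Suc i)) * lam (d - i)) - (m i - m (Suc i)) * lam i)"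
        by (rule sum.cong) (auto simp: psl algebra_simps)
      also have "\<dots> = real b * (\<Sum>i=1..d-1. (\<lambda>i. (m i - m (Suc i)) * lam (d - i)) i) - (\<Sum>i=1..d-1. (m i - m (Suc i)) * lam i)"
        by (simp add: sum_subtractf sum_distrib_left)
      also have "(\<Sum>i=1..d-1. (\<lambda>i. (m i - m (Suc i)) * lam (d - i)) i) = (\<Sum>i=1..d-1. (\<lambda>i. (m i - m (Suc i)) * lam (d - i)) (d - i))"
        by (rule rev_sum1[symmetric])
      also have "\<dots> = (\<Sum>i=1..d-1. (m (d - i) - m (Suc (d - i))) * lam i)"
        by (rule sum.cong) auto
      finally have "(\<Sum>k=1..d. z k * m k) = (\<Sum>i=1..d-1. real b * ((m (d - i) - m (Suc (d - i))) * lam i) - (m i - m (Suc i)) * lam i)"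
        unfolding sum_subtractf sum_distrib_left .
      also have "\<dots> \<ge> 0"
      proof (rule sum_nonneg)
        fix i assume i: "i \<in> {1..d-1}"
        have "real b * ((m (d - i) - m (Suc (d - i))) * lam i) - (m i - m (Suc i)) * lam i
            = (real b * (m (d - i) - m (Suc (d - i))) - (m i - m (Suc i))) * lam i" by (simp add: algebra_simps)
        also have "\<dots> \<ge> 0" using D[OF i] lampos[OF i] by simp
        finally show "real b * ((m (d - i) - m (Suc (d - i))) * lam i) - (m i - m (Suc i)) * lam i \<ge> 0" .
      qed
      finally show ?thesis .
    qed
    then show "z \<in> RegDual b d" using z unfolding RegDual_def T0_def by auto
  qed
qed

definition W :: "nat \<Rightarrow> nat \<Rightarrow> (nat \<Rightarrow> real) \<Rightarrow> nat \<Rightarrow> real" where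
  "W b d lam = (\<lambda>k. \<Sum>i=1..d-1. lam i * (real b * vv (d - i) k - vv i k))"

lemma Pvv: "1 \<le> i \<Longrightarrow> ps (vv i) s = (if s = i then 1 else 0)"
  by (induction s) (auto simp: ps_Suc vv_def)

lemma psW: "ps (W b d lam) s = (\<Sum>i=1..d-1. lam i * (real b * (if s = d - i then 1 else 0) - (if s = i then 1 else 0)))"
proof -
  have "ps (W b d lam) s = (\<Sum>k=1..s. \<Sum>i=1..d-1. lam i * (real b * vv (d - i) k - vv i k))"
    by (simp add: ps_def W_def)
  also have "\<dots> = (\<Sum>i=1..d-1. \<Sum>k=1..s. lam i * (real b * vv (d - i) k - vv i k))"
    by (rule sum.swap)
  also have "\<dots> = (\<Sum>i=1..d-1. lam i * (real b * ps (vv (d - i)) s - ps (vv i) s))"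
  proof (rule sum.cong)
    fix i
    have "(\<Sum>k=1..s. lam i * (real b * vv (d - i) k - vv i k)) = lam i * (\<Sum>k=1..s. real b * vv (d - i) k - vv i k)"
      by (simp add: sum_distrib_left)
    also have "\<dots> = lam i * (real b * ps (vv (d - i)) s - ps (vv i) s)"
      by (simp add: ps_def sum_subtractf sum_distrib_left)
    finally show "(\<Sum>k=1..s. lam i * (real b * vv (d - i) k - vv i k)) = lam i * (real b * ps (vv (d - i)) s - ps (vv i) s)" .
  qed simp
  also have "\<dots> = (\<Sum>i=1..d-1. lam i * (real b * (if s = d - i then 1 else 0) - (if s = i then 1 else 0)))"
    by (rule sum.cong) (auto simp: Pvv)
  finally show ?thesis .
qed

lemma psW2: assumes "s \<le> d"
  shows "ps (W b d lam) s = (if s \<in> {1..d-1} then real b * lam (d - s) - lam s else 0)"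
proof -
  have "ps (W b d lam) s = (\<Sum>i=1..d-1. real b * ((if i = d - s then 1 else 0) * lam i) - (if i = s then 1 else 0) * lam i)"
    unfolding psW
  proof (rule sum.cong)
    fix i assume i: "i \<in> {1..d-1}"
    have c: "(s = d - i) = (i = d - s)" "(s = i) = (i = s)" using i assms by auto
    show "lam i * (real b * (if s = d - i then 1 else 0) - (if s = i then 1 else 0)) =
       real b * ((if i = d - s then 1 else 0) * lam i) - (if i = s then 1 else 0) * lam i"
      unfolding c by (simp add: algebra_simps split del: if_split)
  qed simp
  also have "\<dots> = (\<Sum>i=1..d-1. real b * (if i = d - s then lam i else 0) - (if i = s then lam i else 0))"
    by (rule sum.cong) simp_all
  also have "\<dots> = real b * (if d - s \<in> {1..d-1} then lam (d - s) else 0) - (if s \<in> {1..d-1} then lam s else 0)"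
    by (simp add: sum_subtractf sum_distrib_left[symmetric] sum.delta)
  also have "\<dots> = (if s \<in> {1..d-1} then real b * lam (d - s) - lam s else 0)"
  proof (cases "s \<in> {1..d-1}")
    case True
    then have "d - s \<in> {1..d-1}" by auto
    with True show ?thesis by simp
  next
    case False
    then have h: "d - s \<notin> {1..d-1}" using assms by auto
    show ?thesis by (subst if_not_P[OF False])+ (subst if_not_P[OF h], simp)
  qed
  finally show ?thesis .
qed

lemma W_vecs: "W b d lam \<in> vecs d"
  unfolding vecs_def W_def by (auto intro!: sum.neutral simp: vv_def)

lemma Cone_T0: assumes "b \<ge> 2" "d \<ge> 1"
  shows "{W b d lam | lam. \<forall>i\<in>{1..d-1}. lam i \<ge> 0} = T0 b d"
proof
  have b4: "real b * real b \<ge> 2 * 2" using assms by (intro mult_mono) auto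
  show "{W b d lam | lam. \<forall>i\<in>{1..d-1}. lam i \<ge> 0} \<subseteq> T0 b d"
  proof
    fix z assume "z \<in> {W b d lam | lam. \<forall>i\<in>{1..d-1}. lam i \<ge> 0}"
    then obtain lam where z: "z = W b d lam" and lp: "\<forall>i\<in>{1..d-1}. lam i \<ge> 0" by auto
    have "d \<notin> {1..d-1}" using assms by auto
    then have pd: "ps z d = 0" unfolding z using psW2[of d d b lam] assms by auto
    have "ps z s + real b * ps z (d - s) \<ge> 0" if s: "s \<in> {1..d-1}" for s
    proof -
      have e: "d - (d - s) = s" "d - s \<in> {1..d-1}" "s \<le> d" "d - s \<le> d" using s by auto
      have "ps z s + real b * ps z (d - s) = (real b * lam (d - s) - lam s) + real b * (real b * lam s - lam (d - s))"
        unfolding z using psW2[OF e(3), of b lam] psW2[OF e(4), of b lam] s e by simp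
      also have "\<dots> = (real b * real b - 1) * lam s" by (simp add: algebra_simps)
      also have "\<dots> \<ge> 0" using lp s b4 by simp
      finally show ?thesis .
    qed
    then show "z \<in> T0 b d" unfolding T0_def using pd z W_vecs by auto
  qed
next
  have b4: "real b * real b \<ge> 2 * 2" using assms by (intro mult_mono) auto
  have bne: "real b * real b - 1 > 0" using b4 by simp
  show "T0 b d \<subseteq> {W b d lam | lam. \<forall>i\<in>{1..d-1}. lam i \<ge> 0}"
  proof
    fix z assume z: "z \<in> T0 b d"
    have zv: "z \<in> vecs d" and pd: "ps z d = 0" and zc: "\<And>s. s \<in> {1..d-1} \<Longrightarrow> ps z s + real b * ps z (d - s) \<ge> 0"
      using z unfolding T0_def by auto
    define lam where "lam i = (ps z i + real b * ps z (d - i)) / (real b * real b - 1)" for i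
    have lampos: "\<forall>i\<in>{1..d-1}. lam i \<ge> 0"
      unfolding lam_def using zc bne by simp
    have "z = W b d lam"
    proof (rule vecs_eq[OF zv W_vecs])
      fix s assume s: "s \<le> d"
      show "ps z s = ps (W b d lam) s"
      proof (cases "s \<in> {1..d-1}")
        case True
        have "d - (d - s) = s" using s by auto
        then have "real b * lam (d - s) - lam s = ps z s"
          unfolding lam_def using alg[of "real b * real b - 1" "real b" "ps z (d - s)" "ps z s"] bne by simp
        then show ?thesis using psW2[OF s, of b lam] True by simp
      next
        case False
        then have "s = 0 \<or> s = d" using s by auto
        then show ?thesis using psW2[OF s, of b lam] False pd by auto
      qed
    qed
    then show "z \<in> {W b d lam | lam. \<forall>i\<in>{1..d-1}. lam i \<ge> 0}" using lampos by auto
  qed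
qed

lemma rhosum: "s \<le> d \<Longrightarrow> (\<Sum>k=1..s. rho d k) = real s * (real d - real s) / 2"
proof (induction s)
  case 0 then show ?case by simp
next
  case (Suc s)
  then have "(\<Sum>k=1..Suc s. rho d k) = real s * (real d - real s) / 2 + ((real d + 1) / 2 - real (Suc s))"
    by (simp add: rho_def)
  also have "\<dots> = real (Suc s) * (real d - real (Suc s)) / 2" by (simp add: field_simps)
  finally show ?case .
qed

lemma shiftT: assumes "b \<ge> 2" "d \<ge> 1"
  shows "(\<lambda>k. 2 * rho d k / (real b + 1) + z k) \<in> T b d \<longleftrightarrow> z \<in> T0 b d"
proof -
  let ?r = "\<lambda>k. 2 * rho d k / (real b + 1)"
  have psr: "ps ?r s = real s * (real d - real s) / (real b + 1)" if "s \<le> d" for s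
    unfolding ps_def using rhosum[OF that] by (simp add: sum_divide_distrib[symmetric] sum_distrib_left[symmetric])
  have pss: "ps (\<lambda>k. ?r k + z k) s = ps ?r s + ps z s" for s by (simp add: ps_def sum.distrib)
  have rv: "?r \<in> vecs d" unfolding vecs_def rho_def by auto
  have vv: "(\<lambda>k. ?r k + z k) \<in> vecs d \<longleftrightarrow> z \<in> vecs d" using rv unfolding vecs_def by auto
  have cond: "ps (\<lambda>k. ?r k + z k) s + real b * ps (\<lambda>k. ?r k + z k) (d - s) \<ge> real s * (real d - real s)
     \<longleftrightarrow> ps z s + real b * ps z (d - s) \<ge> 0" if s: "s \<in> {1..d-1}" for s
  proof -
    have e: "s \<le> d" "d - s \<le> d" "real (d - s) = real d - real s" using s by auto
    have "ps ?r s + real b * ps ?r (d - s) = (real s * (real d - real s) + real b * ((real d - real s) * (real d - (real d - real s)))) / (real b + 1)"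
      unfolding psr[OF e(1)] psr[OF e(2)] e(3) by (simp add: add_divide_distrib)
    also have "real s * (real d - real s) + real b * ((real d - real s) * (real d - (real d - real s))) = real s * (real d - real s) * (real b + 1)"
      by (simp add: algebra_simps)
    finally have eq: "ps ?r s + real b * ps ?r (d - s) = real s * (real d - real s)" by simp
    have "ps (\<lambda>k. ?r k + z k) s + real b * ps (\<lambda>k. ?r k + z k) (d - s) = (ps z s + real b * ps z (d - s)) + (ps ?r s + real b * ps ?r (d - s))"
      unfolding pss by (simp add: algebra_simps)
    then show ?thesis using eq by linarith
  qed
  have pd: "ps (\<lambda>k. ?r k + z k) d = ps z d" unfolding pss using psr[of d] by simp
  show ?thesis unfolding T_def T0_def using vv cond pd by auto
qed

lemma shift_set: assumes "b \<ge> 2" "d \<ge> 1"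
  shows "{(\<lambda>k. 2 * rho d k / (real b + 1) + z k) | z. z \<in> T0 b d} = T b d"
proof
  show "{(\<lambda>k. 2 * rho d k / (real b + 1) + z k) | z. z \<in> T0 b d} \<subseteq> T b d"
    using shiftT[OF assms] by auto
next
  show "T b d \<subseteq> {(\<lambda>k. 2 * rho d k / (real b + 1) + z k) | z. z \<in> T0 b d}"
  proof
    fix y assume y: "y \<in> T b d"
    let ?z = "\<lambda>k. y k - 2 * rho d k / (real b + 1)"
    have e: "(\<lambda>k. 2 * rho d k / (real b + 1) + ?z k) = y" by auto
    then have "?z \<in> T0 b d" using shiftT[OF assms, of ?z] y by simp
    then show "y \<in> {(\<lambda>k. 2 * rho d k / (real b + 1) + z k) | z. z \<in> T0 b d}"
      apply (intro CollectI)
      apply (rule exI[where x="?z"])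
      using e by simp
  qed
qed

lemma set2_T: assumes "d \<ge> 1"
  shows "{y \<in> vecs d. (\<Sum>k=1..d. y k) = 0 \<and>
              (\<forall>s\<in>{1..d-1}. (\<Sum>k=1..s. y k) - real b * (\<Sum>k=d+1-s..d. y k)
                              \<ge> real s * (real d - real s))} = T b d"
proof -
  have h: "ps y s - real b * (\<Sum>k=d+1-s..d. y k) = ps y s + real b * ps y (d - s)"
    if "ps y d = 0" "s \<in> {1..d-1}" for y s
  proof -
    have "d + 1 - s = Suc (d - s)" using that by auto
    then have "(\<Sum>k=d+1-s..d. y k) = ps y d - ps y (d - s)" using ps_split[of "d - s" d y] by simp
    then show ?thesis using that by simp
  qed
  show ?thesis unfolding T_def ps_def[symmetric]
  proof (rule Collect_cong, rule conj_cong[OF refl], rule conj_cong[OF refl])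
    fix y assume y: "ps y d = 0"
    show "(\<forall>s\<in>{1..d-1}. ps y s - real b * (\<Sum>k=d+1-s..d. y k) \<ge> real s * (real d - real s)) =
        (\<forall>s\<in>{1..d-1}. ps y s + real b * ps y (d - s) \<ge> real s * (real d - real s))"
    proof (rule ball_cong[OF refl])
      fix s assume s: "s \<in> {1..d-1}"
      show "(ps y s - real b * (\<Sum>k=d+1-s..d. y k) \<ge> real s * (real d - real s)) =
        (ps y s + real b * ps y (d - s) \<ge> real s * (real d - real s))"
        unfolding h[OF y s] ..
    qed
  qed
qed

theorem mainTheorem14:
  fixes b d :: nat
  assumes "b \<ge> 2" and "d \<ge> 1"
  shows "Aset b d (Qmin d) =
           {(\<lambda>k. 2 * rho d k / (real b + 1) + z k) | z. z \<in> RegDual b d}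
       \<and> Aset b d (Qmin d) =
           {y \<in> vecs d. (\<Sum>k=1..d. y k) = 0 \<and>
              (\<forall>s\<in>{1..d-1}. (\<Sum>k=1..s. y k) - real b * (\<Sum>k=d+1-s..d. y k)
                              \<ge> real s * (real d - real s))}
       \<and> Aset b d (Qmin d) =
           {(\<lambda>k. 2 * rho d k / (real b + 1)
                  + (\<Sum>i=1..d-1. lam i * (real b * vv (d - i) k - vv i k))) | lam.
              \<forall>i\<in>{1..d-1}. lam i \<ge> 0}"
proof (intro conjI)
  show "Aset b d (Qmin d) = {(\<lambda>k. 2 * rho d k / (real b + 1) + z k) | z. z \<in> RegDual b d}"
    unfolding Aset_T[OF assms] RegDual_T0[OF assms] shift_set[OF assms] ..
  show "Aset b d (Qmin d) =
           {y \<in> vecs d. (\<Sum>k=1..d. y k) = 0 \<and>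
              (\<forall>s\<in>{1..d-1}. (\<Sum>k=1..s. y k) - real b * (\<Sum>k=d+1-s..d. y k)
                              \<ge> real s * (real d - real s))}"
    unfolding Aset_T[OF assms] set2_T[OF assms(2)] ..
  have "{(\<lambda>k. 2 * rho d k / (real b + 1)
                  + (\<Sum>i=1..d-1. lam i * (real b * vv (d - i) k - vv i k))) | lam.
              \<forall>i\<in>{1..d-1}. lam i \<ge> 0}
     = {(\<lambda>k. 2 * rho d k / (real b + 1) + z k) | z. z \<in> {W b d lam | lam. \<forall>i\<in>{1..d-1}. lam i \<ge> 0}}"
  proof (rule set_eqI, rule iffI)
    fix x assume "x \<in> {(\<lambda>k. 2 * rho d k / (real b + 1)
                  + (\<Sum>i=1..d-1. lam i * (real b * vv (d - i) k - vv i k))) | lam.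
              \<forall>i\<in>{1..d-1}. lam i \<ge> 0}"
    then obtain lam where x: "x = (\<lambda>k. 2 * rho d k / (real b + 1)
                  + (\<Sum>i=1..d-1. lam i * (real b * vv (d - i) k - vv i k)))" and l: "\<forall>i\<in>{1..d-1}. lam i \<ge> 0" by blast
    show "x \<in> {(\<lambda>k. 2 * rho d k / (real b + 1) + z k) | z. z \<in> {W b d lam | lam. \<forall>i\<in>{1..d-1}. lam i \<ge> 0}}"
      apply (intro CollectI)
      apply (rule exI[where x="W b d lam"])
      using x l unfolding W_def by blast
  next
    fix x assume "x \<in> {(\<lambda>k. 2 * rho d k / (real b + 1) + z k) | z. z \<in> {W b d lam | lam. \<forall>i\<in>{1..d-1}. lam i \<ge> 0}}"
    then obtain lam where x: "x = (\<lambda>k. 2 * rho d k / (real b + 1) + W b d lam k)" and l: "\<forall>i\<in>{1..d-1}. lam i \<ge> 0" by blast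
    show "x \<in> {(\<lambda>k. 2 * rho d k / (real b + 1)
                  + (\<Sum>i=1..d-1. lam i * (real b * vv (d - i) k - vv i k))) | lam.
              \<forall>i\<in>{1..d-1}. lam i \<ge> 0}"
      apply (intro CollectI)
      apply (rule exI[where x="lam"])
      using x l unfolding W_def by blast
  qed
  then show "Aset b d (Qmin d) =
           {(\<lambda>k. 2 * rho d k / (real b + 1)
                  + (\<Sum>i=1..d-1. lam i * (real b * vv (d - i) k - vv i k))) | lam.
              \<forall>i\<in>{1..d-1}. lam i \<ge> 0}"
    unfolding Cone_T0[OF assms] shift_set[OF assms] Aset_T[OF assms] by simp
qed

end
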